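(* Let $A$ be a generalized ring and $\mathfrak a$ an h-ideal of $A$. Then $\bigcap_{\mathfrak p\in spec(A),\ \mathfrak p\supseteq\mathfrak a}\mathfrak p=\sqrt{\mathfrak a}$, where $\sqrt{\mathfrak a}=\{a\in A_{[1]}: a^n\in\mathfrak a\text{ for some }n>0\}$ (the empty intersection being $A_{[1]}$).
   Context: All sets $X,Y,Z,W$ below are finite. A partial map $f:X\rightharpoonup Y$ is a map $f:D(f)\to Y$ defined on a subset $D(f)\subseteq X$; $f^{-1}(y)\subseteq D(f)$ is its fibre, $Set_\bullet(X,Y)$ is the set of partial maps, composed as partial maps. $\mathbb F_\bullet$ is the category of finite sets with partial bijections as morphisms; $f^t$ is the inverse partial bijection. $[1]=\{1\}$ and $c_X:X\to[1]$ is the total map. A generalized ring $A$ consists of: (1) a functor $X\mapsto A_X$, $f\mapsto f_A$, from $\mathbb F_\bullet$ to pointed sets with $A_\emptyset=\{0\}$; for $f\in Set_\bullet(X,Y)$ put $A_f=\prod_{y\in Y}A_{f^{-1}(y)}$; so $A_{c_X}=A_X$, and $A_{id_X}$ is identified with $(A_{[1]})^X$. (2) For each $f\in Set_\bullet(X,Y)$ a multiplication $\circ:A_Y\times A_f\to A_X$ and a contraction $(\,,\,):A_X\times A_f\to A_Y$, both giving $0$ when an argument is $0$; for $g\in Set_\bullet(Y,Z)$ extended fibrewise to $\circ:A_g\times A_f\to A_{g\circ f}$ and $(\,,\,):A_{g\circ f}\times A_f\to A_g$ by $(a\circ b)^{(z)}=a^{(z)}\circ b|_z$, $(c,b)^{(z)}=(c^{(z)},b|_z)$,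 with $b|_z=(b^{(y)})_{y\in g^{-1}(z)}\in A_{f|_z}$, $f|_z:(g\circ f)^{-1}(z)\rightharpoonup g^{-1}(z)$ the restriction. (3) A unit $1\in A_{[1]}$, with transports $1_x\in A_{\{x\}}$ and, for partial bijections $f$, $1_f\in A_f$ with components $1_{f^t(y)}$ on the image and $0$ elsewhere. Axioms, for partial maps $W\xleftarrow{h}Z\xleftarrow{g}Y\xleftarrow{f}X$: $d\circ(c\circ b)=(d\circ c)\circ b$ ($d\in A_h,c\in A_g,b\in A_f$); $(d,a\circ c)=((d,c),a)$ ($d\in A_{h\circ g\circ f},a\in A_g,c\in A_f$); $(d\circ c,a)=(d,(a,c))$ ($d\in A_{h\circ g},a\in A_{g\circ f},c\in A_f$); $(d\circ a,c)=d\circ(a,c)$ ($d\in A_h,a\in A_{g\circ f},c\in A_f$); for $Z\xrightarrow{g}Y\xleftarrow{f}X$, $h\in Set_\bullet(Y,W)$, $P=\{(z,x)\in D(g)\times D(f):g(z)=f(x)\}$ with projections $\tilde f,\tilde g$, $\tilde c^{(z)}=c^{(g(z))}\in A_{\tilde f}$, $\tilde a^{(x)}=a^{(f(x))}\in A_{\tilde g}$: $(d,c)\circ a=(d\circ\tilde a,\tilde c)$ for $d\in A_{h\circ f},a\in A_g,c\in A_f$; $a\circ 1_{id_X}=1_{id_Y}\circ a=(a,1_{id_X})=a$ for $a\in A_f$; $a\circ 1_{f^t}=(a,1_f)=f_A(a)$ for $a\in A_X$, $f$ a partial bijection. $A_{[1]}$ is a commutative monoid under $\circ$ with unit $1$,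 powers $a^n$; we have $(\,,\,):A_X\times A_X\to A_{[1]}$ and $\circ:A_X\times(A_{[1]})^X\to A_X$. An h-ideal is a subset $\mathfrak a\subseteq A_{[1]}$ with $(b\circ c,d)\in\mathfrak a$ for all finite $X$, $b,d\in A_X$, $c\in\mathfrak a^X$; proper if $1\notin\mathfrak a$. A prime is a proper h-ideal $\mathfrak p$ with $a\circ b\in\mathfrak p\Rightarrow a\in\mathfrak p$ or $b\in\mathfrak p$; $spec(A)$ is the set of primes. *)

theory Defs
  imports Main "HOL-Library.Nat_Bijection"
begin

text \<open>Finite sets are modelled as finite sets of natural numbers; partial maps
  X \<rightharpoonup> Y as maps nat \<Rightarrow> nat option with domain in X and range in Y.
  [1] is the set {1}.  Elements of all A_X live in one type 'a; A_X is the
  carrier set carr R X with base point zer R X.  Elements of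
  A_f = prod_{y in Y} A_{f^{-1}(y)} are families nat \<Rightarrow> 'a, undefined outside Y.\<close>

record 'a gring =
  carr  :: "nat set \<Rightarrow> 'a set"
  zer   :: "nat set \<Rightarrow> 'a"
  amap  :: "nat set \<Rightarrow> nat set \<Rightarrow> (nat \<Rightarrow> nat option) \<Rightarrow> 'a \<Rightarrow> 'a"
  mult  :: "nat set \<Rightarrow> nat set \<Rightarrow> (nat \<Rightarrow> nat option) \<Rightarrow> 'a \<Rightarrow> (nat \<Rightarrow> 'a) \<Rightarrow> 'a"
  contr :: "nat set \<Rightarrow> nat set \<Rightarrow> (nat \<Rightarrow> nat option) \<Rightarrow> 'a \<Rightarrow> (nat \<Rightarrow> 'a) \<Rightarrow> 'a"
  one   :: 'a

definition pmap :: "nat set \<Rightarrow> nat set \<Rightarrow> (nat \<Rightarrow> nat option) \<Rightarrow> bool" where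
  "pmap X Y f \<longleftrightarrow> dom f \<subseteq> X \<and> ran f \<subseteq> Y"

definition pbij :: "nat set \<Rightarrow> nat set \<Rightarrow> (nat \<Rightarrow> nat option) \<Rightarrow> bool" where
  "pbij X Y f \<longleftrightarrow> pmap X Y f \<and> inj_on f (dom f)"

definition pid :: "nat set \<Rightarrow> nat \<Rightarrow> nat option" where
  "pid X = (\<lambda>x. if x \<in> X then Some x else None)"

definition cmap :: "nat set \<Rightarrow> nat \<Rightarrow> nat option" where
  "cmap X = (\<lambda>x. if x \<in> X then Some 1 else None)"

definition ptrans :: "(nat \<Rightarrow> nat option) \<Rightarrow> nat \<Rightarrow> nat option" where
  "ptrans f = (\<lambda>y. if y \<in> ran f then Some (THE x. f x = Some y) else None)"

definition fib :: "nat set \<Rightarrow> (nat \<Rightarrow> nat option) \<Rightarrow> nat \<Rightarrow> nat set" where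
  "fib X f y = {x \<in> X. f x = Some y}"

definition famset :: "'a gring \<Rightarrow> nat set \<Rightarrow> nat set \<Rightarrow> (nat \<Rightarrow> nat option) \<Rightarrow> (nat \<Rightarrow> 'a) set" where
  "famset R X Y f = {b. (\<forall>y\<in>Y. b y \<in> carr R (fib X f y)) \<and> (\<forall>y. y \<notin> Y \<longrightarrow> b y = undefined)}"

definition zfam :: "'a gring \<Rightarrow> nat set \<Rightarrow> nat set \<Rightarrow> (nat \<Rightarrow> nat option) \<Rightarrow> nat \<Rightarrow> 'a" where
  "zfam R X Y f = (\<lambda>y. if y \<in> Y then zer R (fib X f y) else undefined)"

definition frestr :: "nat set \<Rightarrow> (nat \<Rightarrow> 'a) \<Rightarrow> nat \<Rightarrow> 'a" where
  "frestr S b = (\<lambda>y. if y \<in> S then b y else undefined)"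

text \<open>fibrewise multiplication A_g \<times> A_f \<rightarrow> A_{g\<circ>f}, f : X \<rightharpoonup> Y, g : Y \<rightharpoonup> Z\<close>
definition fmult :: "'a gring \<Rightarrow> nat set \<Rightarrow> nat set \<Rightarrow> nat set \<Rightarrow> (nat \<Rightarrow> nat option)
    \<Rightarrow> (nat \<Rightarrow> nat option) \<Rightarrow> (nat \<Rightarrow> 'a) \<Rightarrow> (nat \<Rightarrow> 'a) \<Rightarrow> nat \<Rightarrow> 'a" where
  "fmult R X Y Z f g a b = (\<lambda>z. if z \<in> Z then
      mult R (fib X (g \<circ>\<^sub>m f) z) (fib Y g z) (f |` fib X (g \<circ>\<^sub>m f) z) (a z) (frestr (fib Y g z) b)
    else undefined)"

text \<open>fibrewise contraction A_{g\<circ>f} \<times> A_f \<rightarrow> A_g\<close>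
definition fcontr :: "'a gring \<Rightarrow> nat set \<Rightarrow> nat set \<Rightarrow> nat set \<Rightarrow> (nat \<Rightarrow> nat option)
    \<Rightarrow> (nat \<Rightarrow> nat option) \<Rightarrow> (nat \<Rightarrow> 'a) \<Rightarrow> (nat \<Rightarrow> 'a) \<Rightarrow> nat \<Rightarrow> 'a" where
  "fcontr R X Y Z f g c b = (\<lambda>z. if z \<in> Z then
      contr R (fib X (g \<circ>\<^sub>m f) z) (fib Y g z) (f |` fib X (g \<circ>\<^sub>m f) z) (c z) (frestr (fib Y g z) b)
    else undefined)"

definition onex :: "'a gring \<Rightarrow> nat \<Rightarrow> 'a" where
  "onex R x = amap R {1} {x} ((\<lambda>_. Some x) \<circ>\<^sub>m pid {1}) (one R)"

definition onefam :: "'a gring \<Rightarrow> nat set \<Rightarrow> nat set \<Rightarrow> (nat \<Rightarrow> nat option) \<Rightarrow> nat \<Rightarrow> 'a" where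
  "onefam R X Y f = (\<lambda>y. if y \<in> Y then
      (if y \<in> ran f then onex R (the (ptrans f y)) else zer R {}) else undefined)"

text \<open>identification (A_[1])^X \<cong> A_{id_X}\<close>
definition tofam :: "'a gring \<Rightarrow> nat set \<Rightarrow> (nat \<Rightarrow> 'a) \<Rightarrow> nat \<Rightarrow> 'a" where
  "tofam R X c = (\<lambda>x. if x \<in> X then amap R {1} {x} ((\<lambda>_. Some x) \<circ>\<^sub>m pid {1}) (c x) else undefined)"

text \<open>identification A_X = A_{c_X}\<close>
definition single :: "'a \<Rightarrow> nat \<Rightarrow> 'a" where
  "single a = (\<lambda>y. if y = 1 then a else undefined)"

text \<open>product on A_[1], the maps A_X \<times> (A_[1])^X \<rightarrow> A_X and A_X \<times> A_X \<rightarrow> A_[1]\<close>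
definition m1 :: "'a gring \<Rightarrow> 'a \<Rightarrow> 'a \<Rightarrow> 'a" where
  "m1 R a b = mult R {1} {1} (pid {1}) a (tofam R {1} (\<lambda>_. b))"

definition smul :: "'a gring \<Rightarrow> nat set \<Rightarrow> 'a \<Rightarrow> (nat \<Rightarrow> 'a) \<Rightarrow> 'a" where
  "smul R X b c = mult R X X (pid X) b (tofam R X c)"

definition pairing :: "'a gring \<Rightarrow> nat set \<Rightarrow> 'a \<Rightarrow> 'a \<Rightarrow> 'a" where
  "pairing R X b d = contr R X {1} (cmap X) b (single d)"

fun gpow :: "'a gring \<Rightarrow> 'a \<Rightarrow> nat \<Rightarrow> 'a" where
  "gpow R a 0 = one R"
| "gpow R a (Suc n) = m1 R a (gpow R a n)"

definition functor_ax :: "'a gring \<Rightarrow> bool" where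
  "functor_ax R \<longleftrightarrow>
     carr R {} = {zer R {}} \<and>
     (\<forall>X. finite X \<longrightarrow> zer R X \<in> carr R X) \<and>
     (\<forall>X Y f. finite X \<and> finite Y \<and> pbij X Y f \<longrightarrow>
        amap R X Y f ` carr R X \<subseteq> carr R Y \<and> amap R X Y f (zer R X) = zer R Y) \<and>
     (\<forall>X. finite X \<longrightarrow> (\<forall>a\<in>carr R X. amap R X X (pid X) a = a)) \<and>
     (\<forall>X Y Z f g. finite X \<and> finite Y \<and> finite Z \<and> pbij X Y f \<and> pbij Y Z g \<longrightarrow>
        (\<forall>a\<in>carr R X. amap R X Z (g \<circ>\<^sub>m f) a = amap R Y Z g (amap R X Y f a)))"

definition ops_ax :: "'a gring \<Rightarrow> bool" where
  "ops_ax R \<longleftrightarrow> one R \<in> carr R {1} \<and>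
     (\<forall>X Y f. finite X \<and> finite Y \<and> pmap X Y f \<longrightarrow>
        (\<forall>a\<in>carr R Y. \<forall>b\<in>famset R X Y f. mult R X Y f a b \<in> carr R X) \<and>
        (\<forall>a\<in>carr R X. \<forall>b\<in>famset R X Y f. contr R X Y f a b \<in> carr R Y) \<and>
        (\<forall>b\<in>famset R X Y f. mult R X Y f (zer R Y) b = zer R X) \<and>
        (\<forall>a\<in>carr R Y. mult R X Y f a (zfam R X Y f) = zer R X) \<and>
        (\<forall>b\<in>famset R X Y f. contr R X Y f (zer R X) b = zer R Y) \<and>
        (\<forall>a\<in>carr R X. contr R X Y f a (zfam R X Y f) = zer R Y))"

definition assoc_ax :: "'a gring \<Rightarrow> bool" where
  "assoc_ax R \<longleftrightarrow>
    (\<forall>X Y Z W f g h. finite X \<and> finite Y \<and> finite Z \<and> finite W \<and>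
       pmap X Y f \<and> pmap Y Z g \<and> pmap Z W h \<longrightarrow>
      (\<forall>d\<in>famset R Z W h. \<forall>c\<in>famset R Y Z g. \<forall>b\<in>famset R X Y f.
         fmult R X Z W (g \<circ>\<^sub>m f) h d (fmult R X Y Z f g c b)
         = fmult R X Y W f (h \<circ>\<^sub>m g) (fmult R Y Z W g h d c) b) \<and>
      (\<forall>d\<in>famset R X W (h \<circ>\<^sub>m g \<circ>\<^sub>m f). \<forall>a\<in>famset R Y Z g. \<forall>c\<in>famset R X Y f.
         fcontr R X Z W (g \<circ>\<^sub>m f) h d (fmult R X Y Z f g a c)
         = fcontr R Y Z W g h (fcontr R X Y W f (h \<circ>\<^sub>m g) d c) a) \<and>
      (\<forall>d\<in>famset R Y W (h \<circ>\<^sub>m g). \<forall>a\<in>famset R X Z (g \<circ>\<^sub>m f). \<forall>c\<in>famset R X Y f.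
         fcontr R X Z W (g \<circ>\<^sub>m f) h (fmult R X Y W f (h \<circ>\<^sub>m g) d c) a
         = fcontr R Y Z W g h d (fcontr R X Y Z f g a c)) \<and>
      (\<forall>d\<in>famset R Z W h. \<forall>a\<in>famset R X Z (g \<circ>\<^sub>m f). \<forall>c\<in>famset R X Y f.
         fcontr R X Y W f (h \<circ>\<^sub>m g) (fmult R X Z W (g \<circ>\<^sub>m f) h d a) c
         = fmult R Y Z W g h d (fcontr R X Y Z f g a c)))"

text \<open>Fibre product P of Z -g-> Y <-f- X, encoded in nat via prod_encode (z,x),
  with projections ft : P \<rightarrow> Z and gt : P \<rightarrow> X.\<close>
definition fprod :: "nat set \<Rightarrow> nat set \<Rightarrow> (nat \<Rightarrow> nat option) \<Rightarrow> (nat \<Rightarrow> nat option) \<Rightarrow> nat set" where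
  "fprod Z X g f = {prod_encode (z, x) | z x. z \<in> Z \<and> x \<in> X \<and> g z \<noteq> None \<and> g z = f x}"

definition proj1 :: "nat set \<Rightarrow> nat \<Rightarrow> nat option" where
  "proj1 P = (\<lambda>p. if p \<in> P then Some (fst (prod_decode p)) else None)"

definition proj2 :: "nat set \<Rightarrow> nat \<Rightarrow> nat option" where
  "proj2 P = (\<lambda>p. if p \<in> P then Some (snd (prod_decode p)) else None)"

text \<open>c~ \<in> A_{ft}: c~^(z) = c^(g z) transported along f^{-1}(g z) \<cong> ft^{-1}(z)\<close>
definition ctil :: "'a gring \<Rightarrow> nat set \<Rightarrow> nat set \<Rightarrow> (nat \<Rightarrow> nat option) \<Rightarrow> (nat \<Rightarrow> nat option)
    \<Rightarrow> (nat \<Rightarrow> 'a) \<Rightarrow> nat \<Rightarrow> 'a" where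
  "ctil R Z X g f c = (let P = fprod Z X g f in (\<lambda>z. if z \<in> Z then
     (case g z of None \<Rightarrow> zer R {}
      | Some y \<Rightarrow> amap R (fib X f y) (fib P (proj1 P) z)
          (\<lambda>x. if x \<in> fib X f y then Some (prod_encode (z, x)) else None) (c y))
     else undefined))"

text \<open>a~ \<in> A_{gt}: a~^(x) = a^(f x) transported along g^{-1}(f x) \<cong> gt^{-1}(x)\<close>
definition atil :: "'a gring \<Rightarrow> nat set \<Rightarrow> nat set \<Rightarrow> (nat \<Rightarrow> nat option) \<Rightarrow> (nat \<Rightarrow> nat option)
    \<Rightarrow> (nat \<Rightarrow> 'a) \<Rightarrow> nat \<Rightarrow> 'a" where
  "atil R Z X g f a = (let P = fprod Z X g f in (\<lambda>x. if x \<in> X then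
     (case f x of None \<Rightarrow> zer R {}
      | Some y \<Rightarrow> amap R (fib Z g y) (fib P (proj2 P) x)
          (\<lambda>z. if z \<in> fib Z g y then Some (prod_encode (z, x)) else None) (a y))
     else undefined))"

definition pullback_ax :: "'a gring \<Rightarrow> bool" where
  "pullback_ax R \<longleftrightarrow>
    (\<forall>X Y Z W f g h. finite X \<and> finite Y \<and> finite Z \<and> finite W \<and>
       pmap X Y f \<and> pmap Z Y g \<and> pmap Y W h \<longrightarrow>
      (\<forall>d\<in>famset R X W (h \<circ>\<^sub>m f). \<forall>a\<in>famset R Z Y g. \<forall>c\<in>famset R X Y f.
         let P = fprod Z X g f in
         fmult R Z Y W g h (fcontr R X Y W f h d c) a
         = fcontr R P Z W (proj1 P) (h \<circ>\<^sub>m g)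
             (fmult R P X W (proj2 P) (h \<circ>\<^sub>m f) d (atil R Z X g f a)) (ctil R Z X g f c)))"

definition unit_ax :: "'a gring \<Rightarrow> bool" where
  "unit_ax R \<longleftrightarrow>
    (\<forall>X Y f. finite X \<and> finite Y \<and> pmap X Y f \<longrightarrow>
       (\<forall>a\<in>famset R X Y f.
          fmult R X X Y (pid X) f a (onefam R X X (pid X)) = a \<and>
          fmult R X Y Y f (pid Y) (onefam R Y Y (pid Y)) a = a \<and>
          fcontr R X X Y (pid X) f a (onefam R X X (pid X)) = a)) \<and>
    (\<forall>X Y f. finite X \<and> finite Y \<and> pbij X Y f \<longrightarrow>
       (\<forall>a\<in>carr R X.
          mult R Y X (ptrans f) a (onefam R Y X (ptrans f)) = amap R X Y f a \<and>
          contr R X Y f a (onefam R X Y f) = amap R X Y f a))"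

text \<open>The context states that A_[1] is a commutative monoid under \<circ>.\<close>
definition comm_ax :: "'a gring \<Rightarrow> bool" where
  "comm_ax R \<longleftrightarrow> (\<forall>a\<in>carr R {1}. \<forall>b\<in>carr R {1}. m1 R a b = m1 R b a)"

definition gen_ring :: "'a gring \<Rightarrow> bool" where
  "gen_ring R \<longleftrightarrow> functor_ax R \<and> ops_ax R \<and> assoc_ax R \<and> pullback_ax R \<and> unit_ax R \<and> comm_ax R"

definition hideal :: "'a gring \<Rightarrow> 'a set \<Rightarrow> bool" where
  "hideal R I \<longleftrightarrow> I \<subseteq> carr R {1} \<and>
     (\<forall>X. finite X \<longrightarrow> (\<forall>b\<in>carr R X. \<forall>d\<in>carr R X. \<forall>c. (\<forall>x\<in>X. c x \<in> I) \<longrightarrow>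
        pairing R X (smul R X b c) d \<in> I))"

definition hprime :: "'a gring \<Rightarrow> 'a set \<Rightarrow> bool" where
  "hprime R p \<longleftrightarrow> hideal R p \<and> one R \<notin> p \<and>
     (\<forall>a\<in>carr R {1}. \<forall>b\<in>carr R {1}. m1 R a b \<in> p \<longrightarrow> a \<in> p \<or> b \<in> p)"

definition spec :: "'a gring \<Rightarrow> 'a set set" where
  "spec R = {p. hprime R p}"

definition hradical :: "'a gring \<Rightarrow> 'a set \<Rightarrow> 'a set" where
  "hradical R I = {a \<in> carr R {1}. \<exists>n>0. gpow R a n \<in> I}"

end

theory Submission
  imports Defs
begin

declare One_nat_def[simp del]

definition mv :: "nat \<Rightarrow> nat \<Rightarrow> nat \<Rightarrow> nat option" where
  "mv a b = (\<lambda>y. if y = a then Some b else None)"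

definition at :: "nat \<Rightarrow> 'a \<Rightarrow> nat \<Rightarrow> 'a" where
  "at u x = (\<lambda>y. if y = u then x else undefined)"

lemma pid_mv: "pid {v} = mv v v" by (auto simp: pid_def mv_def)
lemma cmap_mv: "cmap {v} = mv v 1" by (auto simp: cmap_def mv_def)
lemma sg_mv: "(\<lambda>_. Some x) \<circ>\<^sub>m pid {1} = mv 1 x" by (auto simp: pid_def mv_def map_comp_def)
lemma single_at: "single = at 1" by (auto simp: single_def at_def)
lemma mv_comp[simp]: "mv b c \<circ>\<^sub>m mv a b = mv a c" by (auto simp: map_comp_def mv_def)
lemma ptrans_mv[simp]: "ptrans (mv a b) = mv b a" by (auto simp: ptrans_def mv_def ran_def fun_eq_iff)
lemma ran_mv[simp]: "ran (mv a b) = {b}" by (auto simp: mv_def ran_def)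
lemma dom_mv[simp]: "dom (mv a b) = {a}" by (auto simp: mv_def dom_def)
lemma pmap_mv[simp]: "pmap {a} {b} (mv a b)" by (auto simp: pmap_def)
lemma pbij_mv[simp]: "pbij {a} {b} (mv a b)" by (auto simp: pbij_def)
lemma fib_mv[simp]: "fib {a} (mv a b) b = {a}" by (auto simp: fib_def mv_def)
lemma restr_mv[simp]: "mv a b |` {a} = mv a b" by (auto simp: mv_def restrict_map_def)
lemma frestr_at[simp]: "frestr {u} (at u x) = at u x" by (auto simp: frestr_def at_def)
lemma at_app[simp]: "at u x u = x" by (simp add: at_def)
lemma the_mv[simp]: "the (mv a b a) = b" by (simp add: mv_def)

lemma fmult_single: "fmult R X Y {z} f g a b = at z (mult R (fib X (g \<circ>\<^sub>m f) z) (fib Y g z) (f |` fib X (g \<circ>\<^sub>m f) z) (a z) (frestr (fib Y g z) b))"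
  by (auto simp: fmult_def at_def fun_eq_iff)
lemma fcontr_single: "fcontr R X Y {z} f g a b = at z (contr R (fib X (g \<circ>\<^sub>m f) z) (fib Y g z) (f |` fib X (g \<circ>\<^sub>m f) z) (a z) (frestr (fib Y g z) b))"
  by (auto simp: fcontr_def at_def fun_eq_iff)

lemma at_famset: "x \<in> carr R (fib X f u) \<Longrightarrow> at u x \<in> famset R X {u} f"
  by (auto simp: famset_def at_def)

lemma at_eq_iff: "at u x = at u y \<longleftrightarrow> x = y" by (metis at_app)


definition pe :: "nat \<Rightarrow> nat" where "pe x = prod_encode (1, x)"
definition tau :: "nat set \<Rightarrow> nat \<Rightarrow> nat option" where
  "tau X = (\<lambda>x. if x \<in> X then Some (pe x) else None)"

lemma pe_inj[simp]: "pe x = pe y \<longleftrightarrow> x = y" by (simp add: pe_def)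
lemma pe_snd[simp]: "snd (prod_decode (pe x)) = x" by (simp add: pe_def)
lemma pe_fst[simp]: "fst (prod_decode (pe x)) = 1" by (simp add: pe_def)

lemma L1: "mv 1 1 \<circ>\<^sub>m cmap X = cmap X" by (auto simp: mv_def cmap_def map_comp_def fun_eq_iff)
lemma L2: "fib X (cmap X) 1 = X" by (auto simp: fib_def cmap_def)
lemma L3: "cmap X |` X = cmap X" by (auto simp: cmap_def restrict_map_def fun_eq_iff)
lemma L4: "fprod {1} X (mv 1 1) (cmap X) = pe ` X" by (auto simp: fprod_def mv_def cmap_def pe_def)
lemma L5: "proj1 (pe ` X) = cmap (pe ` X)" by (auto simp: proj1_def cmap_def fun_eq_iff)
lemma L6: "cmap X \<circ>\<^sub>m proj2 (pe ` X) = cmap (pe ` X)" by (auto simp: proj2_def cmap_def map_comp_def fun_eq_iff)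
lemma L7: "proj2 P |` P = proj2 P" by (auto simp: proj2_def restrict_map_def fun_eq_iff)
lemma L8: "x \<in> X \<Longrightarrow> fib (pe ` X) (proj2 (pe ` X)) x = {pe x}" by (auto simp: fib_def proj2_def)
lemma L9: "pid X \<circ>\<^sub>m proj2 (pe ` X) = proj2 (pe ` X)" by (auto simp: proj2_def pid_def map_comp_def fun_eq_iff)
lemma L10: "x \<in> X \<Longrightarrow> proj2 (pe ` X) |` {pe x} = mv (pe x) x" by (auto simp: proj2_def mv_def restrict_map_def fun_eq_iff)
lemma L11a: "x \<in> X \<Longrightarrow> fib X (pid X) x = {x}" by (auto simp: fib_def pid_def)
lemma L11b: "pid X |` X = pid X" by (auto simp: pid_def restrict_map_def fun_eq_iff)
lemma L11c: "cmap X \<circ>\<^sub>m pid X = cmap X" by (auto simp: pid_def cmap_def map_comp_def fun_eq_iff)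
lemma L11d: "p \<in> P \<Longrightarrow> pid P |` {p} = mv p p" by (auto simp: pid_def mv_def restrict_map_def fun_eq_iff)
lemma L11e: "proj2 P \<circ>\<^sub>m pid P = proj2 P" by (auto simp: pid_def proj2_def map_comp_def fun_eq_iff)
lemma L11f: "cmap P \<circ>\<^sub>m pid P = cmap P" by (auto simp: pid_def cmap_def map_comp_def fun_eq_iff)
lemma L11g: "mv 1 1 \<circ>\<^sub>m proj1 (pe ` X) = cmap (pe ` X)" by (auto simp: proj1_def mv_def cmap_def map_comp_def fun_eq_iff)
lemma L11h: "x \<in> X \<Longrightarrow> fib (pe ` X) (proj2 (pe ` X) \<circ>\<^sub>m pid (pe ` X)) x = {pe x}" by (auto simp: fib_def proj2_def pid_def map_comp_def)
lemma L11i: "x \<in> X \<Longrightarrow> fib (pe ` X) (pid X \<circ>\<^sub>m proj2 (pe ` X)) x = {pe x}" by (auto simp: fib_def proj2_def pid_def map_comp_def)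
lemma L11j: "fib X (cmap X \<circ>\<^sub>m pid X) 1 = X" by (auto simp: fib_def pid_def cmap_def map_comp_def)
lemma L11k: "fib X (mv 1 1 \<circ>\<^sub>m cmap X) 1 = X" by (auto simp: fib_def mv_def cmap_def map_comp_def)
lemma L11l: "fib {1} (mv 1 1) 1 = {1}" by (auto simp: fib_def mv_def)
lemma pmap_cmap: "pmap X {1} (cmap X)" by (auto simp: pmap_def cmap_def ran_def dom_def split: if_splits)
lemma pmap_pid: "pmap X X (pid X)" by (auto simp: pmap_def pid_def ran_def dom_def split: if_splits)
lemma pmap_proj2: "pmap (pe ` X) X (proj2 (pe ` X))" by (auto simp: pmap_def proj2_def ran_def dom_def split: if_splits)
lemma pbij_tau: "pbij X (pe ` X) (tau X)" by (auto simp: pbij_def pmap_def tau_def ran_def dom_def inj_on_def split: if_splits)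
lemma frestr_single: "frestr {x} f = at x (f x)" by (auto simp: frestr_def at_def fun_eq_iff)
lemma frestr_if: "frestr S (\<lambda>x. if x \<in> S then g x else undefined) = (\<lambda>x. if x \<in> S then g x else undefined)"
  by (auto simp: frestr_def fun_eq_iff)
lemma frestr_fmult: "frestr X (fmult R A B X f g a b) = fmult R A B X f g a b" by (auto simp: frestr_def fmult_def fun_eq_iff)
lemma frestr_tofam: "frestr X (tofam R X c) = tofam R X c" by (auto simp: frestr_def tofam_def fun_eq_iff)
lemma frestr_tofam1: "x \<in> X \<Longrightarrow> frestr {x} (tofam R X c) = at x (amap R {1} {x} (mv 1 x) (c x))"
  by (auto simp: frestr_def tofam_def at_def fun_eq_iff sg_mv)
lemma tofam_app: "x \<in> X \<Longrightarrow> tofam R X c x = amap R {1} {x} (mv 1 x) (c x)" by (simp add: tofam_def sg_mv)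
lemma atil_eq: "atil R {1} X (mv 1 1) (cmap X) (at 1 s) = (\<lambda>x. if x \<in> X then amap R {1} {pe x} (mv 1 (pe x)) s else undefined)"
proof (rule ext)
  fix x show "atil R {1} X (mv 1 1) (cmap X) (at 1 s) x = (if x \<in> X then amap R {1} {pe x} (mv 1 (pe x)) s else undefined)"
  proof (cases "x \<in> X")
    case True
    have m: "(\<lambda>z. if z = 1 then Some (prod_encode (z, x)) else None) = mv 1 (pe x)"
      by (auto simp: fib_def mv_def pe_def fun_eq_iff)
    show ?thesis using True unfolding atil_def Let_def L4
      by (simp add: cmap_def L8 m L11l)
  qed (simp add: atil_def Let_def)
qed
lemma ctil_eq: "ctil R {1} X (mv 1 1) (cmap X) (at 1 d) = at 1 (amap R X (pe ` X) (tau X) d)"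
proof -
  have m: "(\<lambda>x. if x \<in> X then Some (prod_encode (1, x)) else None) = tau X"
    by (auto simp: fib_def cmap_def tau_def pe_def fun_eq_iff)
  have f: "fib (pe ` X) (proj1 (pe ` X)) 1 = pe ` X" by (auto simp: fib_def L5 cmap_def)
  show ?thesis unfolding ctil_def Let_def L4
    by (auto simp: at_def fun_eq_iff mv_def m f L2)
qed

locale gr = fixes R :: "'a gring" assumes gr: "gen_ring R"
begin

lemma F: "functor_ax R" using gr by (simp add: gen_ring_def)
lemma O: "ops_ax R" using gr by (simp add: gen_ring_def)
lemma AS: "assoc_ax R" using gr by (simp add: gen_ring_def)
lemma PB: "pullback_ax R" using gr by (simp add: gen_ring_def)
lemma U: "unit_ax R" using gr by (simp add: gen_ring_def)
lemma C: "comm_ax R" using gr by (simp add: gen_ring_def)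

lemma amap_carr: "finite X \<Longrightarrow> finite Y \<Longrightarrow> pbij X Y f \<Longrightarrow> a \<in> carr R X \<Longrightarrow> amap R X Y f a \<in> carr R Y"
  using F[unfolded functor_ax_def, THEN conjunct2, THEN conjunct2, THEN conjunct1, rule_format, of X Y f] by blast
lemma amap_id: "finite X \<Longrightarrow> a \<in> carr R X \<Longrightarrow> amap R X X (pid X) a = a"
  using F[unfolded functor_ax_def, THEN conjunct2, THEN conjunct2, THEN conjunct2, THEN conjunct1, rule_format, of X] by blast
lemma amap_comp: "finite X \<Longrightarrow> finite Y \<Longrightarrow> finite Z \<Longrightarrow> pbij X Y f \<Longrightarrow> pbij Y Z g \<Longrightarrow> a \<in> carr R X \<Longrightarrow>
   amap R X Z (g \<circ>\<^sub>m f) a = amap R Y Z g (amap R X Y f a)"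
  using F[unfolded functor_ax_def, THEN conjunct2, THEN conjunct2, THEN conjunct2, THEN conjunct2, rule_format, of X Y Z f g] by blast
lemma one_carr: "one R \<in> carr R {1}"
  using O[unfolded ops_ax_def, THEN conjunct1] .
lemma ops: assumes "finite X" "finite Y" "pmap X Y f" shows
        "(\<forall>a\<in>carr R Y. \<forall>b\<in>famset R X Y f. mult R X Y f a b \<in> carr R X) \<and>
        (\<forall>a\<in>carr R X. \<forall>b\<in>famset R X Y f. contr R X Y f a b \<in> carr R Y)"
proof -
  have H: "finite X \<and> finite Y \<and> pmap X Y f" using assms by simp
  show ?thesis using O[unfolded ops_ax_def, THEN conjunct2, THEN spec[of _ X], THEN spec[of _ Y], THEN spec[of _ f], THEN mp, OF H]
    by (elim conjE) (intro conjI)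
qed
lemma mult_carr: "finite X \<Longrightarrow> finite Y \<Longrightarrow> pmap X Y f \<Longrightarrow> a \<in> carr R Y \<Longrightarrow> b \<in> famset R X Y f \<Longrightarrow> mult R X Y f a b \<in> carr R X"
  using ops[THEN conjunct1] by blast
lemma contr_carr: "finite X \<Longrightarrow> finite Y \<Longrightarrow> pmap X Y f \<Longrightarrow> a \<in> carr R X \<Longrightarrow> b \<in> famset R X Y f \<Longrightarrow> contr R X Y f a b \<in> carr R Y"
  using ops[THEN conjunct2] by blast
lemma ax_assoc1: assumes "finite X" "finite Y" "finite Z" "finite W"
       "pmap X Y f" "pmap Y Z g" "pmap Z W h"
      "d\<in>famset R Z W h" "c\<in>famset R Y Z g" "b\<in>famset R X Y f" shows
         "fmult R X Z W (g \<circ>\<^sub>m f) h d (fmult R X Y Z f g c b)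
         = fmult R X Y W f (h \<circ>\<^sub>m g) (fmult R Y Z W g h d c) b"
proof -
  have H: "finite X \<and> finite Y \<and> finite Z \<and> finite W \<and> pmap X Y f \<and> pmap Y Z g \<and> pmap Z W h" using assms by simp
  have "\<forall>d\<in>famset R Z W h. \<forall>c\<in>famset R Y Z g. \<forall>b\<in>famset R X Y f.
         fmult R X Z W (g \<circ>\<^sub>m f) h d (fmult R X Y Z f g c b)
         = fmult R X Y W f (h \<circ>\<^sub>m g) (fmult R Y Z W g h d c) b"
    using AS[unfolded assoc_ax_def, THEN spec[of _ X], THEN spec[of _ Y], THEN spec[of _ Z], THEN spec[of _ W],
       THEN spec[of _ f], THEN spec[of _ g], THEN spec[of _ h], THEN mp, OF H] by (elim conjE)
  thus ?thesis using assms(8-10) by (elim ballE) auto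
qed
lemma ax_pb: assumes "finite X" "finite Y" "finite Z" "finite W"
       "pmap X Y f" "pmap Z Y g" "pmap Y W h"
      "d\<in>famset R X W (h \<circ>\<^sub>m f)" "a\<in>famset R Z Y g" "c\<in>famset R X Y f" shows
         "fmult R Z Y W g h (fcontr R X Y W f h d c) a
         = fcontr R (fprod Z X g f) Z W (proj1 (fprod Z X g f)) (h \<circ>\<^sub>m g)
             (fmult R (fprod Z X g f) X W (proj2 (fprod Z X g f)) (h \<circ>\<^sub>m f) d (atil R Z X g f a)) (ctil R Z X g f c)"
proof -
  have H: "finite X \<and> finite Y \<and> finite Z \<and> finite W \<and> pmap X Y f \<and> pmap Z Y g \<and> pmap Y W h" using assms by simp
  have "\<forall>d\<in>famset R X W (h \<circ>\<^sub>m f). \<forall>a\<in>famset R Z Y g. \<forall>c\<in>famset R X Y f.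
         fmult R Z Y W g h (fcontr R X Y W f h d c) a
         = fcontr R (fprod Z X g f) Z W (proj1 (fprod Z X g f)) (h \<circ>\<^sub>m g)
             (fmult R (fprod Z X g f) X W (proj2 (fprod Z X g f)) (h \<circ>\<^sub>m f) d (atil R Z X g f a)) (ctil R Z X g f c)"
    using PB[unfolded pullback_ax_def Let_def, THEN spec[of _ X], THEN spec[of _ Y], THEN spec[of _ Z], THEN spec[of _ W],
       THEN spec[of _ f], THEN spec[of _ g], THEN spec[of _ h], THEN mp, OF H] .
  thus ?thesis using assms(8-10) by (elim ballE) auto
qed
lemma ax_u: assumes "finite X" "finite Y" "pmap X Y f" "a\<in>famset R X Y f" shows
          "fmult R X X Y (pid X) f a (onefam R X X (pid X)) = a \<and>
          fmult R X Y Y f (pid Y) (onefam R Y Y (pid Y)) a = a \<and>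
          fcontr R X X Y (pid X) f a (onefam R X X (pid X)) = a"
proof -
  have H: "finite X \<and> finite Y \<and> pmap X Y f" using assms by simp
  show ?thesis using U[unfolded unit_ax_def, THEN conjunct1, THEN spec[of _ X], THEN spec[of _ Y], THEN spec[of _ f], THEN mp, OF H, THEN bspec, OF assms(4)] .
qed
lemma ax_u2: "finite X \<Longrightarrow> finite Y \<Longrightarrow> pmap X Y f \<Longrightarrow> a\<in>famset R X Y f \<Longrightarrow>
          fmult R X Y Y f (pid Y) (onefam R Y Y (pid Y)) a = a"
  using ax_u by blast
lemma ax_u3: "finite X \<Longrightarrow> finite Y \<Longrightarrow> pmap X Y f \<Longrightarrow> a\<in>famset R X Y f \<Longrightarrow>
          fcontr R X X Y (pid X) f a (onefam R X X (pid X)) = a"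
  using ax_u by blast
lemma ax_u4: assumes "finite X" "finite Y" "pbij X Y f" "a\<in>carr R X" shows
          "mult R Y X (ptrans f) a (onefam R Y X (ptrans f)) = amap R X Y f a"
proof -
  have H: "finite X \<and> finite Y \<and> pbij X Y f" using assms by simp
  show ?thesis using U[unfolded unit_ax_def, THEN conjunct2, THEN spec[of _ X], THEN spec[of _ Y], THEN spec[of _ f], THEN mp, OF H, THEN bspec, OF assms(4)] 
    by (rule conjunct1)
qed
lemma comm: "a\<in>carr R {1} \<Longrightarrow> b\<in>carr R {1} \<Longrightarrow> m1 R a b = m1 R b a"
  using C[unfolded comm_ax_def] by blast

lemma amap_mv_carr: "a \<in> carr R {1} \<Longrightarrow> amap R {1} {v} (mv 1 v) a \<in> carr R {v}"
  by (rule amap_carr) auto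
lemma amap_mv_inv: "a \<in> carr R {1} \<Longrightarrow> amap R {v} {1} (mv v 1) (amap R {1} {v} (mv 1 v) a) = a"
  using amap_comp[of "{1}" "{v}" "{1}" "mv 1 v" "mv v 1" a] amap_id[of "{1}" a]
  by (simp add: pid_mv)
lemma amap_mv_inv2: "a \<in> carr R {v} \<Longrightarrow> amap R {1} {v} (mv 1 v) (amap R {v} {1} (mv v 1) a) = a"
  using amap_comp[of "{v}" "{1}" "{v}" "mv v 1" "mv 1 v" a] amap_id[of "{v}" a]
  by (simp add: pid_mv)
lemma onex_eq: "onex R x = amap R {1} {x} (mv 1 x) (one R)"
  unfolding onex_def sg_mv ..
lemma onex1: "onex R 1 = one R"
  using amap_id[of "{1}" "one R"] one_carr by (simp add: onex_eq pid_mv)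
lemma onex_carr: "onex R x \<in> carr R {x}"
  unfolding onex_eq by (rule amap_mv_carr[OF one_carr])
lemma onefam_mv: "onefam R {a} {b} (mv a b) = at b (onex R a)"
  by (auto simp: onefam_def at_def fun_eq_iff)
lemma m1_eq: "b \<in> carr R {1} \<Longrightarrow> m1 R a b = mult R {1} {1} (mv 1 1) a (at 1 b)"
proof -
  assume b: "b \<in> carr R {1}"
  have "tofam R {1} (\<lambda>_. b) = at 1 b"
    using amap_id[OF _ b] unfolding tofam_def at_def sg_mv by (auto simp: fun_eq_iff pid_mv)
  thus ?thesis by (simp add: m1_def pid_mv)
qed


lemma at_fam_mv: "x \<in> carr R {a} \<Longrightarrow> at b x \<in> famset R {a} {b} (mv a b)"
  by (rule at_famset) simp

lemma T1: assumes a: "\<alpha> \<in> carr R {1}" and b: "\<beta> \<in> carr R {1}"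
  shows "mult R {1} {u} (mv 1 u) (amap R {1} {u} (mv 1 u) \<alpha>) (at u \<beta>) = m1 R \<alpha> \<beta>"
proof -
  have au: "amap R {1} {u} (mv 1 u) \<alpha> = mult R {u} {1} (mv u 1) \<alpha> (at 1 (onex R u))"
    using ax_u4[of "{1}" "{u}" "mv 1 u" \<alpha>] a by (simp add: onefam_mv)
  define Q where "Q = mult R {1} {u} (mv 1 u) (onex R u) (at u \<beta>)"
  have Qc: "Q \<in> carr R {1}" unfolding Q_def
    by (rule mult_carr) (auto intro: at_fam_mv b onex_carr)
  have "fmult R {1} {u} {u} (mv 1 u) (pid {u}) (onefam R {u} {u} (pid {u})) (at u \<beta>) = at u \<beta>"
    by (rule ax_u2) (auto intro: at_fam_mv b)
  hence "at u Q = at u \<beta>" by (simp add: pid_mv onefam_mv fmult_single Q_def)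
  hence Q: "Q = \<beta>" by (simp add: at_eq_iff)
  have "fmult R {1} {1} {1} (mv u 1 \<circ>\<^sub>m mv 1 u) (mv 1 1) (at 1 \<alpha>) (fmult R {1} {u} {1} (mv 1 u) (mv u 1) (at 1 (onex R u)) (at u \<beta>))
      = fmult R {1} {u} {1} (mv 1 u) (mv 1 1 \<circ>\<^sub>m mv u 1) (fmult R {u} {1} {1} (mv u 1) (mv 1 1) (at 1 \<alpha>) (at 1 (onex R u))) (at u \<beta>)"
    by (rule ax_assoc1) (auto intro: at_fam_mv a b onex_carr)
  hence "at 1 (mult R {1} {1} (mv 1 1) \<alpha> (at 1 Q)) = at 1 (mult R {1} {u} (mv 1 u) (amap R {1} {u} (mv 1 u) \<alpha>) (at u \<beta>))"
    by (simp add: fmult_single Q_def au)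
  hence "mult R {1} {u} (mv 1 u) (amap R {1} {u} (mv 1 u) \<alpha>) (at u \<beta>) = mult R {1} {1} (mv 1 1) \<alpha> (at 1 Q)"
    by (simp add: at_eq_iff)
  also have "\<dots> = m1 R \<alpha> \<beta>" using m1_eq[OF b] Q by simp
  finally show ?thesis .
qed

lemma T: assumes a: "\<alpha> \<in> carr R {1}" and b: "\<beta> \<in> carr R {1}"
  shows "mult R {v} {u} (mv v u) (amap R {1} {u} (mv 1 u) \<alpha>) (at u (amap R {1} {v} (mv 1 v) \<beta>))
       = amap R {1} {v} (mv 1 v) (m1 R \<alpha> \<beta>)"
proof -
  define LT where "LT = mult R {v} {u} (mv v u) (amap R {1} {u} (mv 1 u) \<alpha>) (at u (amap R {1} {v} (mv 1 v) \<beta>))"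
  have LTc: "LT \<in> carr R {v}" unfolding LT_def
    by (rule mult_carr) (auto intro: at_fam_mv amap_mv_carr a b)
  have o1: "onex R 1 = one R" by (rule onex1)
  have tr: "amap R {v} {1} (mv v 1) z = mult R {1} {v} (mv 1 v) z (at v (one R))" if "z \<in> carr R {v}" for z
    using ax_u4[of "{v}" "{1}" "mv v 1" z] that by (simp add: onefam_mv o1)
  have "fmult R {1} {u} {1} (mv v u \<circ>\<^sub>m mv 1 v) (mv u 1) (at 1 (amap R {1} {u} (mv 1 u) \<alpha>))
          (fmult R {1} {v} {u} (mv 1 v) (mv v u) (at u (amap R {1} {v} (mv 1 v) \<beta>)) (at v (one R)))
      = fmult R {1} {v} {1} (mv 1 v) (mv u 1 \<circ>\<^sub>m mv v u) (fmult R {v} {u} {1} (mv v u) (mv u 1)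
          (at 1 (amap R {1} {u} (mv 1 u) \<alpha>)) (at u (amap R {1} {v} (mv 1 v) \<beta>))) (at v (one R))"
    by (rule ax_assoc1) (auto intro: at_fam_mv a b one_carr amap_mv_carr)
  hence "at 1 (mult R {1} {u} (mv 1 u) (amap R {1} {u} (mv 1 u) \<alpha>) (at u (amap R {v} {1} (mv v 1) (amap R {1} {v} (mv 1 v) \<beta>))))
       = at 1 (amap R {v} {1} (mv v 1) LT)"
    by (simp add: fmult_single LT_def[symmetric] tr[symmetric] LTc amap_mv_carr b)
  hence "amap R {v} {1} (mv v 1) LT = m1 R \<alpha> \<beta>"
    by (simp add: at_eq_iff amap_mv_inv b T1 a)
  hence "amap R {1} {v} (mv 1 v) (amap R {v} {1} (mv v 1) LT) = amap R {1} {v} (mv 1 v) (m1 R \<alpha> \<beta>)" by simp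
  thus ?thesis using amap_mv_inv2[OF LTc] LT_def by simp
qed


lemma m1_carr: "a \<in> carr R {1} \<Longrightarrow> b \<in> carr R {1} \<Longrightarrow> m1 R a b \<in> carr R {1}"
  by (simp add: m1_eq) (rule mult_carr, auto intro: at_fam_mv)

lemma m1_one: assumes a: "a \<in> carr R {1}" shows "m1 R a (one R) = a"
proof -
  have "fmult R {1} {1} {1} (pid {1}) (mv 1 1) (at 1 a) (onefam R {1} {1} (pid {1})) = at 1 a"
    using ax_u[of "{1}" "{1}" "mv 1 1" "at 1 a"] a by (auto intro: at_fam_mv)
  thus ?thesis by (simp add: pid_mv onefam_mv onex1 fmult_single m1_eq one_carr at_eq_iff)
qed

lemma one_m1: "a \<in> carr R {1} \<Longrightarrow> m1 R (one R) a = a"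
proof -
  assume a: "a \<in> carr R {1}"
  have "m1 R (one R) a = m1 R a (one R)" by (rule comm[OF one_carr a])
  thus ?thesis using m1_one[OF a] by simp
qed

lemma m1_assoc: assumes a: "a \<in> carr R {1}" and b: "b \<in> carr R {1}" and c: "c \<in> carr R {1}"
  shows "m1 R a (m1 R b c) = m1 R (m1 R a b) c"
proof -
  have "fmult R {1} {1} {1} (mv 1 1 \<circ>\<^sub>m mv 1 1) (mv 1 1) (at 1 a) (fmult R {1} {1} {1} (mv 1 1) (mv 1 1) (at 1 b) (at 1 c))
      = fmult R {1} {1} {1} (mv 1 1) (mv 1 1 \<circ>\<^sub>m mv 1 1) (fmult R {1} {1} {1} (mv 1 1) (mv 1 1) (at 1 a) (at 1 b)) (at 1 c)"
    by (rule ax_assoc1) (auto intro: at_fam_mv a b c)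
  thus ?thesis by (simp add: fmult_single m1_eq[symmetric] a b c m1_carr at_eq_iff)
qed

lemma gpow_carr: "a \<in> carr R {1} \<Longrightarrow> gpow R a n \<in> carr R {1}"
  by (induction n) (auto simp: one_carr m1_carr)

lemma gpow_add: "a \<in> carr R {1} \<Longrightarrow> m1 R (gpow R a m) (gpow R a n) = gpow R a (m + n)"
  by (induction m) (auto simp: one_m1 gpow_carr m1_assoc[symmetric])

lemma gpow1: "a \<in> carr R {1} \<Longrightarrow> gpow R a (Suc 0) = a"
  by (simp add: m1_one)

lemma hideal_mem: assumes "hideal R J" "finite X" "b \<in> carr R X" "d \<in> carr R X" "\<And>x. x \<in> X \<Longrightarrow> c x \<in> J"
  shows "pairing R X (smul R X b c) d \<in> J"
proof -
  have "\<forall>b\<in>carr R X. \<forall>d\<in>carr R X. \<forall>c. (\<forall>x\<in>X. c x \<in> J) \<longrightarrow> pairing R X (smul R X b c) d \<in> J"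
    using assms(1)[unfolded hideal_def, THEN conjunct2, THEN spec[of _ X], THEN mp, OF assms(2)] .
  thus ?thesis using assms(3-5) by blast
qed

lemma absorb: assumes J: "hideal R J" and x: "x \<in> J" and b: "b \<in> carr R {1}"
  shows "m1 R b x \<in> J"
proof -
  have "pairing R {1} (smul R {1} b (\<lambda>_. x)) (one R) \<in> J"
    by (rule hideal_mem[OF J]) (auto simp: x b one_carr)
  moreover have "smul R {1} b (\<lambda>_. x) = m1 R b x" by (simp add: smul_def m1_def)
  moreover have xc: "x \<in> carr R {1}" using J x unfolding hideal_def by (elim conjE) (rule subsetD)
  moreover have "pairing R {1} z (one R) = z" if z: "z \<in> carr R {1}" for z
  proof -
    have "fcontr R {1} {1} {1} (pid {1}) (mv 1 1) (at 1 z) (onefam R {1} {1} (pid {1})) = at 1 z"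
      by (rule ax_u3) (auto intro: at_fam_mv z)
    thus ?thesis by (simp add: pairing_def cmap_mv single_at pid_mv onefam_mv onex1 fcontr_single at_eq_iff)
  qed
  ultimately show ?thesis using m1_carr[OF b xc] by simp
qed


lemma tofam_fs: "(\<And>x. x \<in> X \<Longrightarrow> c x \<in> carr R {1}) \<Longrightarrow> tofam R X c \<in> famset R X X (pid X)"
  by (auto simp: famset_def L11a tofam_app amap_mv_carr) (simp add: tofam_def)

lemma colon_step:
  assumes J: "hideal R J" and s: "s \<in> carr R {1}" and X: "finite X"
    and b: "b \<in> carr R X" and d: "d \<in> carr R X"
    and cc: "\<And>x. x \<in> X \<Longrightarrow> c x \<in> carr R {1}" and cJ: "\<And>x. x \<in> X \<Longrightarrow> m1 R (c x) s \<in> J"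
  shows "m1 R (pairing R X (smul R X b c) d) s \<in> J"
proof -
  define P where "P = pe ` X"
  have P: "finite P" using X by (simp add: P_def)
  have pp: "pmap P X (proj2 P)" unfolding P_def by (rule pmap_proj2)
  define e where "e = smul R X b c"
  have ec: "e \<in> carr R X" unfolding e_def smul_def
    by (rule mult_carr[OF X X pmap_pid b tofam_fs[OF cc]])
  have d1: "at 1 d \<in> famset R X {1} (cmap X)" by (rule at_famset) (simp add: L2 d)
  have e1: "at 1 e \<in> famset R X {1} (cmap X)" by (rule at_famset) (simp add: L2 ec)
  define q where "q = pairing R X e d"
  have qc: "q \<in> carr R {1}" unfolding q_def pairing_def single_at
    by (rule contr_carr[OF X _ pmap_cmap ec d1]) simp
  define A where "A t = (\<lambda>x. if x \<in> X then amap R {1} {pe x} (mv 1 (pe x)) t else undefined)" for t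
  have A_fs: "A t \<in> famset R P X (proj2 P)" if t: "t \<in> carr R {1}" for t
    using t by (auto simp: famset_def A_def P_def L8 amap_mv_carr)
  have fA: "frestr X (A t) = A t" for t by (simp add: A_def frestr_if)
  have atil: "atil R {1} X (mv 1 1) (cmap X) (at 1 s) = A s" by (simp add: atil_eq A_def)
  define d2 where "d2 = amap R X P (tau X) d"
  have d2c: "d2 \<in> carr R P" unfolding d2_def P_def by (rule amap_carr[OF X _ pbij_tau d]) (simp add: X)
  define E where "E = mult R P X (proj2 P) e (A s)"
  have "fmult R {1} {1} {1} (mv 1 1) (mv 1 1) (fcontr R X {1} {1} (cmap X) (mv 1 1) (at 1 e) (at 1 d)) (at 1 s)
      = fcontr R (fprod {1} X (mv 1 1) (cmap X)) {1} {1} (proj1 (fprod {1} X (mv 1 1) (cmap X))) (mv 1 1 \<circ>\<^sub>m mv 1 1)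
          (fmult R (fprod {1} X (mv 1 1) (cmap X)) X {1} (proj2 (fprod {1} X (mv 1 1) (cmap X))) (mv 1 1 \<circ>\<^sub>m cmap X) (at 1 e)
             (atil R {1} X (mv 1 1) (cmap X) (at 1 s))) (ctil R {1} X (mv 1 1) (cmap X) (at 1 d))"
    by (rule ax_pb) (auto simp: X pmap_cmap L1 e1 d1 intro: at_fam_mv s)
  hence "at 1 (m1 R q s) = at 1 (pairing R P E d2)"
    by (simp add: atil ctil_eq L4 L1 fcontr_single fmult_single L11k L11l L2 L3 L6 L11g L7 L5
          m1_eq[symmetric] s q_def pairing_def single_at P_def d2_def E_def A_def frestr_if)
  hence step1: "m1 R q s = pairing R P E d2" by (simp add: at_eq_iff)
  define M where "M = fmult R P X X (proj2 P) (pid X) (tofam R X c) (A s)"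
  have "fmult R P X {1} (pid X \<circ>\<^sub>m proj2 P) (cmap X) (at 1 b) (fmult R P X X (proj2 P) (pid X) (tofam R X c) (A s))
      = fmult R P X {1} (proj2 P) (cmap X \<circ>\<^sub>m pid X) (fmult R X X {1} (pid X) (cmap X) (at 1 b) (tofam R X c)) (A s)"
    by (rule ax_assoc1) (auto simp: X P pmap_pid pmap_cmap pp L2 b intro!: at_famset tofam_fs cc A_fs s)
  hence "at 1 (mult R P X (proj2 P) b M) = at 1 E"
    by (simp add: P_def L9 L11c fmult_single L6 L2 L7 frestr_fmult L11j L11b frestr_tofam M_def E_def e_def smul_def fA)
  hence step2: "E = mult R P X (proj2 P) b M" by (simp add: at_eq_iff)
  define c2 where "c2 p = m1 R (c (snd (prod_decode p))) s" for p
  have c2c: "c2 p \<in> carr R {1}" if "p \<in> P" for p using that cc s by (auto simp: P_def c2_def m1_carr)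
  define M' where "M' = fmult R P P X (pid P) (proj2 P) (A (one R)) (tofam R P c2)"
  have step3: "M = M'"
  proof (rule ext)
    fix x show "M x = M' x"
    proof (cases "x \<in> X")
      case True
      have pP: "pe x \<in> P" using True by (simp add: P_def)
      have "M x = amap R {1} {pe x} (mv 1 (pe x)) (m1 R (c x) s)"
        using True T[of "c x" s "pe x" x] cc[OF True] s
        by (simp add: M_def fmult_def P_def L11i L11a L10 tofam_app frestr_single A_def)
      moreover have "M' x = amap R {1} {pe x} (mv 1 (pe x)) (m1 R (c x) s)"
        using True pP T[of "one R" "c2 (pe x)" "pe x" "pe x"] c2c[OF pP] one_carr
        by (simp add: M'_def fmult_def P_def L11h L8 L11d tofam_app frestr_single A_def one_m1 c2_def)
      ultimately show ?thesis by simp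
    qed (simp add: M_def M'_def fmult_def)
  qed
  define b2 where "b2 = mult R P X (proj2 P) b (A (one R))"
  have b2c: "b2 \<in> carr R P" unfolding b2_def
    by (rule mult_carr[OF P X _ b A_fs[OF one_carr]]) (simp add: P_def pmap_proj2)
  have "fmult R P X {1} (proj2 P \<circ>\<^sub>m pid P) (cmap X) (at 1 b) (fmult R P P X (pid P) (proj2 P) (A (one R)) (tofam R P c2))
      = fmult R P P {1} (pid P) (cmap X \<circ>\<^sub>m proj2 P) (fmult R P X {1} (proj2 P) (cmap X) (at 1 b) (A (one R))) (tofam R P c2)"
    by (rule ax_assoc1) (auto simp: X P pmap_pid pmap_cmap pp L2 b intro!: at_famset tofam_fs c2c A_fs one_carr)
  hence "at 1 (mult R P X (proj2 P) b M') = at 1 (smul R P b2 c2)"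
    by (simp add: P_def L11e L6 fmult_single L2 L7 frestr_fmult L11f L11b frestr_tofam M'_def b2_def smul_def fA)
  hence step4: "E = smul R P b2 c2" using step2 step3 by (simp add: at_eq_iff)
  have "pairing R P (smul R P b2 c2) d2 \<in> J"
    by (rule hideal_mem[OF J P b2c d2c]) (auto simp: P_def c2_def cJ)
  thus ?thesis using step1 step4 q_def e_def by simp
qed


lemma pairing_carr: assumes X: "finite X" and b: "b \<in> carr R X" and d: "d \<in> carr R X"
    and cc: "\<And>x. x \<in> X \<Longrightarrow> c x \<in> carr R {1}"
  shows "pairing R X (smul R X b c) d \<in> carr R {1}"
proof -
  have ec: "smul R X b c \<in> carr R X" unfolding smul_def
    by (rule mult_carr[OF X X pmap_pid b tofam_fs[OF cc]])
  have d1: "at 1 d \<in> famset R X {1} (cmap X)" by (rule at_famset) (simp add: L2 d)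
  show ?thesis unfolding pairing_def single_at
    by (rule contr_carr[OF X _ pmap_cmap ec d1]) simp
qed

lemma colon: assumes J: "hideal R J" and s: "s \<in> carr R {1}"
  shows "hideal R {x \<in> carr R {1}. m1 R x s \<in> J}"
  unfolding hideal_def
proof (intro conjI allI impI ballI)
  show "{x \<in> carr R {1}. m1 R x s \<in> J} \<subseteq> carr R {1}" by blast
  fix X b d c assume X: "finite X" and b: "b \<in> carr R X" and d: "d \<in> carr R X"
    and c: "\<forall>x\<in>X. c x \<in> {x \<in> carr R {1}. m1 R x s \<in> J}"
  show "pairing R X (smul R X b c) d \<in> {x \<in> carr R {1}. m1 R x s \<in> J}"
    using pairing_carr[OF X b d] colon_step[OF J s X b d] c by auto
qed

lemma hideal_carr: "hideal R J \<Longrightarrow> J \<subseteq> carr R {1}" by (simp add: hideal_def)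

lemma colon_sup: assumes J: "hideal R J" and s: "s \<in> carr R {1}"
  shows "J \<subseteq> {x \<in> carr R {1}. m1 R x s \<in> J}"
proof
  fix x assume x: "x \<in> J"
  have xc: "x \<in> carr R {1}" using hideal_carr[OF J] x by blast
  have "m1 R x s = m1 R s x" by (rule comm[OF xc s])
  thus "x \<in> {x \<in> carr R {1}. m1 R x s \<in> J}" using absorb[OF J x s] xc by simp
qed

lemma chain_bound: assumes "finite X" "C \<noteq> {}" "\<forall>A\<in>C. \<forall>B\<in>C. A \<subseteq> B \<or> B \<subseteq> A"
  "\<forall>x\<in>X. c x \<in> \<Union>C" shows "\<exists>J\<in>C. \<forall>x\<in>X. c x \<in> J"
  using assms
proof (induction X rule: finite_induct)
  case empty thus ?case by blast
next
  case (insert x F)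
  then obtain J1 where J1: "J1 \<in> C" "\<forall>y\<in>F. c y \<in> J1" by blast
  obtain J2 where J2: "J2 \<in> C" "c x \<in> J2" using insert.prems by blast
  show ?case
  proof (cases "J1 \<subseteq> J2")
    case True thus ?thesis using J1 J2 by blast
  next
    case False hence "J2 \<subseteq> J1" using insert.prems J1 J2 by blast
    thus ?thesis using J1 J2 by blast
  qed
qed

lemma prime_pow: assumes p: "hprime R p" and a: "a \<in> carr R {1}"
  shows "gpow R a n \<in> p \<Longrightarrow> n > 0 \<Longrightarrow> a \<in> p"
proof (induction n)
  case 0 thus ?case by simp
next
  case (Suc m)
  have "m1 R a (gpow R a m) \<in> p" using Suc.prems by simp
  hence "a \<in> p \<or> gpow R a m \<in> p" using p a gpow_carr[OF a] unfolding hprime_def by blast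
  thus ?case
  proof
    assume g: "gpow R a m \<in> p"
    show ?thesis
    proof (cases m)
      case 0 thus ?thesis using g p by (simp add: hprime_def)
    next
      case (Suc k) thus ?thesis using Suc.IH g by simp
    qed
  qed
qed

lemma exists_prime: assumes I: "hideal R I" and a: "a \<in> carr R {1}" and na: "a \<notin> hradical R I"
  shows "\<exists>p. hprime R p \<and> I \<subseteq> p \<and> a \<notin> p"
proof -
  define F where "F = {J. hideal R J \<and> I \<subseteq> J \<and> (\<forall>n. gpow R a n \<notin> J)}"
  have nI: "\<forall>n>0. gpow R a n \<notin> I" using na a unfolding hradical_def by blast
  have "I \<in> F"
  proof -
    have "gpow R a n \<notin> I" for n
    proof (cases n)
      case 0
      show ?thesis
      proof
        assume "gpow R a n \<in> I"
        hence "one R \<in> I" using 0 by simp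
        hence "m1 R a (one R) \<in> I" by (rule absorb[OF I _ a])
        hence "gpow R a (Suc 0) \<in> I" by simp
        thus False using nI by blast
      qed
    next
      case (Suc k) thus ?thesis using nI by blast
    qed
    thus ?thesis using I by (simp add: F_def)
  qed
  hence Fne: "F \<noteq> {}" by blast
  have "\<exists>M\<in>F. \<forall>X\<in>F. M \<subseteq> X \<longrightarrow> X = M"
  proof (rule subset_Zorn_nonempty[OF Fne])
    fix C assume Cne: "C \<noteq> {}" and ch: "subset.chain F C"
    have CF: "C \<subseteq> F" and tot: "\<forall>A\<in>C. \<forall>B\<in>C. A \<subseteq> B \<or> B \<subseteq> A"
      using ch unfolding subset.chain_def by auto
    have hi: "hideal R (\<Union>C)"
      unfolding hideal_def
    proof (intro conjI allI impI ballI)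
      show "\<Union>C \<subseteq> carr R {1}" using CF by (auto simp: F_def hideal_def)
      fix X b d c assume X: "finite X" and b: "b \<in> carr R X" and d: "d \<in> carr R X"
        and c: "\<forall>x\<in>X. c x \<in> \<Union>C"
      obtain J where J: "J \<in> C" "\<forall>x\<in>X. c x \<in> J" using chain_bound[OF X Cne tot c] by blast
      have "hideal R J" using J CF by (auto simp: F_def)
      hence "pairing R X (smul R X b c) d \<in> J" using hideal_mem X b d J by blast
      thus "pairing R X (smul R X b c) d \<in> \<Union>C" using J by blast
    qed
    show "\<Union>C \<in> F" using hi CF Cne by (auto simp: F_def)
  qed
  then obtain p where pF: "p \<in> F" and pmax: "\<forall>X\<in>F. p \<subseteq> X \<longrightarrow> X = p" by blast
  have ph: "hideal R p" and Ip: "I \<subseteq> p" and pa: "\<forall>n. gpow R a n \<notin> p" using pF by (auto simp: F_def)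
  have colon_in: "\<exists>n. m1 R (gpow R a n) s \<in> p"
    if s: "s \<in> carr R {1}" and u: "u \<in> carr R {1}" "u \<notin> p" "m1 R u s \<in> p" for s u
  proof (rule ccontr)
    assume nt: "\<not> ?thesis"
    let ?K = "{x \<in> carr R {1}. m1 R x s \<in> p}"
    have "?K \<in> F" using colon[OF ph s] colon_sup[OF ph s] Ip nt by (auto simp: F_def)
    hence "?K = p" using pmax colon_sup[OF ph s] by blast
    thus False using u by blast
  qed
  have "hprime R p"
    unfolding hprime_def
  proof (intro conjI ballI impI)
    show "hideal R p" by (rule ph)
    show "one R \<notin> p" using pa[rule_format, of 0] by simp
    fix u v assume u: "u \<in> carr R {1}" and v: "v \<in> carr R {1}" and uv: "m1 R u v \<in> p"
    show "u \<in> p \<or> v \<in> p"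
    proof (rule ccontr)
      assume "\<not> (u \<in> p \<or> v \<in> p)"
      hence nu: "u \<notin> p" and nv: "v \<notin> p" by auto
      obtain n where n: "m1 R (gpow R a n) v \<in> p" using colon_in[OF v u nu uv] by blast
      have an: "gpow R a n \<in> carr R {1}" by (rule gpow_carr[OF a])
      have "m1 R v (gpow R a n) \<in> p" using n comm[OF an v] by simp
      then obtain m where "m1 R (gpow R a m) (gpow R a n) \<in> p" using colon_in[OF an v nv] by blast
      hence "gpow R a (m + n) \<in> p" using gpow_add[OF a] by simp
      thus False using pa by blast
    qed
  qed
  moreover have "a \<notin> p" using pa[rule_format, of "Suc 0"] gpow1[OF a] by simp
  ultimately show ?thesis using Ip by blast
qed

end

theorem lemma4p2p9:
  fixes R :: "'a gring" and I :: "'a set"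
  assumes "gen_ring R" and "hideal R I"
  shows "carr R {1} \<inter> \<Inter> {p \<in> spec R. I \<subseteq> p} = hradical R I"
proof -
  interpret gr R by (rule gr.intro) (rule assms(1))
  show ?thesis
  proof (rule set_eqI, rule iffI)
    fix a assume a: "a \<in> carr R {1} \<inter> \<Inter> {p \<in> spec R. I \<subseteq> p}"
    show "a \<in> hradical R I"
    proof (rule ccontr)
      assume "a \<notin> hradical R I"
      then obtain p where "hprime R p" "I \<subseteq> p" "a \<notin> p" using exists_prime[OF assms(2)] a by blast
      thus False using a by (auto simp: spec_def)
    qed
  next
    fix a assume a: "a \<in> hradical R I"
    then obtain n where ac: "a \<in> carr R {1}" and n: "n > 0" "gpow R a n \<in> I" by (auto simp: hradical_def)
    have "a \<in> p" if "p \<in> spec R" "I \<subseteq> p" for p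
      using prime_pow[of p a n] that ac n by (auto simp: spec_def)
    thus "a \<in> carr R {1} \<inter> \<Inter> {p \<in> spec R. I \<subseteq> p}" using ac by blast
  qed
qed

end
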